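(* For every integer $n\ge1$, the number of permutations $\pi\in S_n$ whose number of alignments equals $(k-1)(n-k)$, where $k$ is the number of weak excedences of $\pi$ (i.e. which have the maximal number of alignments given their number of weak excedences), is the Catalan number $C_n=\frac1n\binom{2n}{n+1}$.
   Context: Place $1,\dots,n$ clockwise on a circle. Distinct $p_1,\dots,p_m$ are in clockwise cyclic order if $(p_2-p_1)\bmod n<\dots<(p_m-p_1)\bmod n$ (residues in $\{0,\dots,n-1\}$). For $\pi\in S_n$ (fixed points regarded as "counterclockwise loops"), an ordered pair $(i,j)$, $i\ne j$, is aligned if $\pi(j)\ne j$, the entries of $(i,\pi(i),\pi(j),j)$ are pairwise distinct except that possibly $i=\pi(i)$, and the distinct entries in this order are in clockwise cyclic order. An alignment is an unordered pair $\{i,j\}$ with $(i,j)$ or $(j,i)$ aligned. A weak excedence of $\pi$ is an $i$ with $\pi(i)\ge i$. For a permutation with $k$ weak excedences, $(k-1)(n-k)$ is the maximum possible number of alignments. *)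

theory Defs
  imports Complex_Main "HOL-Combinatorics.Permutations"
begin

text \<open>Points 1..n on a circle. A list of distinct points p1,...,pm is in clockwise
cyclic order if (p2-p1) mod n < ... < (pm-p1) mod n (residues in 0..n-1).\<close>
definition cyc_ord :: "nat \<Rightarrow> nat list \<Rightarrow> bool" where
  "cyc_ord n xs \<longleftrightarrow> distinct xs \<and>
     sorted_wrt (<) (map (\<lambda>x. (int x - int (hd xs)) mod int n) (tl xs))"

text \<open>Ordered pair (i,j) aligned for the permutation pi (fixed points are
counterclockwise loops): i \<noteq> j, pi j \<noteq> j, entries of (i, pi i, pi j, j) pairwise
distinct except possibly i = pi i, and the distinct entries are in clockwise cyclic order.\<close>
definition aligned :: "nat \<Rightarrow> (nat \<Rightarrow> nat) \<Rightarrow> nat \<Rightarrow> nat \<Rightarrow> bool" where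
  "aligned n \<pi> i j \<longleftrightarrow> i \<noteq> j \<and> \<pi> j \<noteq> j \<and>
     cyc_ord n (if \<pi> i = i then [i, \<pi> j, j] else [i, \<pi> i, \<pi> j, j])"

definition alignments :: "nat \<Rightarrow> (nat \<Rightarrow> nat) \<Rightarrow> nat set set" where
  "alignments n \<pi> = {{i, j} | i j. i \<in> {1..n} \<and> j \<in> {1..n} \<and> aligned n \<pi> i j}"

definition weak_excedences :: "nat \<Rightarrow> (nat \<Rightarrow> nat) \<Rightarrow> nat set" where
  "weak_excedences n \<pi> = {i \<in> {1..n}. \<pi> i \<ge> i}"

end

theory Submission
  imports Defs
begin

lemma md:
  assumes "1 \<le> x" "x \<le> m" "1 \<le> y" "y \<le> m"
  shows "(int y - int x) mod int m = (if x \<le> y then int y - int x else int y - int x + int m)"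
proof (cases "x \<le> y")
  case True then show ?thesis using assms by (auto intro!: mod_pos_pos_trivial)
next
  case False
  have "(int y - int x + int m) mod int m = int y - int x + int m"
    by (rule mod_pos_pos_trivial) (use assms False in auto)
  then show ?thesis using False mod_add_self2[of "int y - int x" "int m"] by simp
qed

definition C3 :: "nat \<Rightarrow> nat \<Rightarrow> nat \<Rightarrow> bool" where
  "C3 x y z \<longleftrightarrow> (x<y \<and> y<z) \<or> (y<z \<and> z<x) \<or> (z<x \<and> x<y)"
definition C4 :: "nat \<Rightarrow> nat \<Rightarrow> nat \<Rightarrow> nat \<Rightarrow> bool" where
  "C4 a b c d \<longleftrightarrow> (a<b\<and>b<c\<and>c<d) \<or> (b<c\<and>c<d\<and>d<a) \<or> (c<d\<and>d<a\<and>a<b) \<or> (d<a\<and>a<b\<and>b<c)"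

lemma cyc3:
  assumes "x \<in> {1..m}" "y \<in> {1..m}" "z \<in> {1..m}"
  shows "cyc_ord m [x,y,z] \<longleftrightarrow> C3 x y z"
  using assms unfolding cyc_ord_def C3_def
  by (auto simp: md)

lemma cyc4:
  assumes "a \<in> {1..m}" "b \<in> {1..m}" "c \<in> {1..m}" "d \<in> {1..m}"
  shows "cyc_ord m [a,b,c,d] \<longleftrightarrow> C4 a b c d"
  using assms unfolding cyc_ord_def C4_def
  by (auto simp: md)

definition ALC :: "(nat \<Rightarrow> nat) \<Rightarrow> nat \<Rightarrow> nat \<Rightarrow> bool" where
  "ALC p i j \<longleftrightarrow> i\<noteq>j \<and> p j \<noteq> j \<and> (if p i = i then C3 i (p j) j else C4 i (p i) (p j) j)"

lemma al_char:
  assumes "i \<in> {1..m}" "j \<in> {1..m}" "p i \<in> {1..m}" "p j \<in> {1..m}"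
  shows "aligned m p i j \<longleftrightarrow> ALC p i j"
  using assms unfolding aligned_def ALC_def by (simp add: cyc3 cyc4)

definition alu :: "nat \<Rightarrow> (nat \<Rightarrow> nat) \<Rightarrow> nat \<Rightarrow> nat \<Rightarrow> bool" where
  "alu m p i j \<longleftrightarrow> aligned m p i j \<or> aligned m p j i"

definition AS :: "nat \<Rightarrow> (nat \<Rightarrow> nat) \<Rightarrow> int" where
  "AS m p = (\<Sum>i\<in>{1..m}. \<Sum>j\<in>{1..m}. of_bool (alu m p i j))"

lemma alu_irrefl: "\<not> alu m p i i"
  unfolding alu_def aligned_def by simp

lemma alu_sym: "alu m p i j = alu m p j i"
  unfolding alu_def by auto

lemma AS_card: "AS m p = 2 * int (card (alignments m p))"
proof -
  define Ob where "Ob = {z \<in> {1..m} \<times> {1..m}. alu m p (fst z) (snd z)}"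
  define O1 where "O1 = {z \<in> Ob. fst z < snd z}"
  define O2 where "O2 = {z \<in> Ob. snd z < fst z}"
  have fOb: "finite Ob" unfolding Ob_def by (rule finite_subset[of _ "{1..m} \<times> {1..m}"]) auto
  have "AS m p = (\<Sum>z\<in>{1..m} \<times> {1..m}. of_bool (alu m p (fst z) (snd z)))"
    unfolding AS_def sum.cartesian_product by (simp add: case_prod_beta)
  also have "\<dots> = int (card Ob)"
    by (simp add: Ob_def Int_def)
  finally have 1: "AS m p = int (card Ob)" .
  have "Ob = O1 \<union> O2" unfolding O1_def O2_def Ob_def using alu_irrefl
    by (auto, metis linorder_neqE_nat)
  moreover have "O1 \<inter> O2 = {}" unfolding O1_def O2_def by auto
  moreover have "card (O1 \<union> O2) = card O1 + card O2"
    by (rule card_Un_disjoint) (use fOb in \<open>auto simp: O1_def O2_def\<close>)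
  ultimately have 2: "card Ob = card O1 + card O2" by simp
  have "bij_betw prod.swap O1 O2"
    unfolding O1_def O2_def Ob_def bij_betw_def
    by (auto simp: alu_sym image_iff intro!: inj_onI)
  then have 3: "card O2 = card O1" by (simp add: bij_betw_same_card)
  have "bij_betw (\<lambda>z. {fst z, snd z}) O1 (alignments m p)"
  proof (rule bij_betwI')
    fix x y assume "x \<in> O1" "y \<in> O1"
    then have "fst x < snd x" "fst y < snd y" unfolding O1_def by auto
    then show "({fst x, snd x} = {fst y, snd y}) = (x = y)"
      by (cases x; cases y) (auto simp: doubleton_eq_iff)
  next
    fix x assume "x \<in> O1"
    then have x: "fst x \<in> {1..m}" "snd x \<in> {1..m}" "aligned m p (fst x) (snd x) \<or> aligned m p (snd x) (fst x)"
      unfolding O1_def Ob_def alu_def by auto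
    show "{fst x, snd x} \<in> alignments m p"
    proof (cases "aligned m p (fst x) (snd x)")
      case True then show ?thesis using x unfolding alignments_def by blast
    next
      case False
      then have "aligned m p (snd x) (fst x)" using x by blast
      moreover have "{fst x, snd x} = {snd x, fst x}" by blast
      ultimately show ?thesis using x unfolding alignments_def by blast
    qed
  next
    fix y assume "y \<in> alignments m p"
    then obtain i j where ij: "y = {i,j}" "i \<in> {1..m}" "j \<in> {1..m}" "aligned m p i j"
      unfolding alignments_def by auto
    then have "i \<noteq> j" unfolding aligned_def by auto
    then show "\<exists>x\<in>O1. y = {fst x, snd x}"
    proof (cases "i < j")
      case True then show ?thesis using ij
        by (intro bexI[of _ "(i,j)"]) (auto simp: O1_def Ob_def alu_def)
    next
      case False then show ?thesis using ij \<open>i\<noteq>j\<close>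
        by (intro bexI[of _ "(j,i)"]) (auto simp: O1_def Ob_def alu_def insert_commute)
    qed
  qed
  then have 4: "card O1 = card (alignments m p)" by (simp add: bij_betw_same_card)
  show ?thesis using 1 2 3 4 by simp
qed

lemma sum_ins2:
  fixes F :: "nat \<Rightarrow> nat \<Rightarrow> int"
  assumes "finite I" "N \<notin> I"
  shows "(\<Sum>i\<in>insert N I. \<Sum>j\<in>insert N I. F i j) = (\<Sum>i\<in>I. \<Sum>j\<in>I. F i j) + (\<Sum>j\<in>I. F N j + F j N) + F N N"
  using assms by (simp add: sum.distrib algebra_simps)

lemma sum_row:
  fixes H :: "nat \<Rightarrow> nat \<Rightarrow> int"
  assumes "finite I" "q \<in> I" "\<And>i j. i \<in> I \<Longrightarrow> j \<in> I \<Longrightarrow> i \<noteq> q \<Longrightarrow> j \<noteq> q \<Longrightarrow> H i j = 0"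
    "\<And>i j. H i j = H j i"
  shows "(\<Sum>i\<in>I. \<Sum>j\<in>I. H i j) = 2 * (\<Sum>j\<in>I. H q j) - H q q"
proof -
  have "(\<Sum>i\<in>I. \<Sum>j\<in>I. H i j) = (\<Sum>j\<in>I. H q j) + (\<Sum>i\<in>I-{q}. \<Sum>j\<in>I. H i j)"
    by (rule sum.remove[OF assms(1,2)])
  also have "(\<Sum>i\<in>I-{q}. \<Sum>j\<in>I. H i j) = (\<Sum>i\<in>I-{q}. H i q)"
  proof (rule sum.cong[OF refl])
    fix i assume i: "i \<in> I - {q}"
    have "(\<Sum>j\<in>I. H i j) = H i q + (\<Sum>j\<in>I-{q}. H i j)"
      by (rule sum.remove[OF assms(1,2)])
    also have "(\<Sum>j\<in>I-{q}. H i j) = 0" using i assms(3) by (intro sum.neutral) auto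
    finally show "(\<Sum>j\<in>I. H i j) = H i q" by simp
  qed
  also have "(\<Sum>i\<in>I-{q}. H i q) = (\<Sum>j\<in>I. H q j) - H q q"
    using sum.remove[OF assms(1,2), of "H q"] assms(4) by simp
  finally show ?thesis by simp
qed

lemma B2:
  fixes q r j b N :: nat
  assumes "j \<noteq> q" "b \<noteq> r" "q \<le> r" "q < N" "r < N" "j < N" "b < N"
    "p q = N" "p N = r" "p j = b" "s q = r" "s j = b"
  shows "of_bool (ALC p q j \<or> ALC p j q) - of_bool (ALC s q j \<or> ALC s j q)
       + of_bool (ALC p j N \<or> ALC p N j)
     = (of_bool (j \<le> b) :: int) - 2 * of_bool (j<q \<and> r<b)"
  using assms unfolding ALC_def C3_def C4_def by auto

lemma B1:
  fixes q r j b N :: nat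
  assumes "j \<noteq> q" "b \<noteq> r" "r < q" "q < N" "r < N" "j < N" "b < N"
    "p q = N" "p N = r" "p j = b" "s q = r" "s j = b"
  shows "of_bool (ALC p q j \<or> ALC p j q) - of_bool (ALC s q j \<or> ALC s j q)
       + of_bool (ALC p j N \<or> ALC p N j)
     = (of_bool (b < j) :: int) - 2 * of_bool (q<j \<and> b<r)"
  using assms unfolding ALC_def C3_def C4_def by auto

definition rm :: "nat \<Rightarrow> (nat \<Rightarrow> nat) \<Rightarrow> nat \<Rightarrow> nat" where
  "rm N p = transpose N (p N) \<circ> p"

lemma rm_apply: "rm N p i = (if p i = N then p N else if p i = p N then N else p i)"
  unfolding rm_def by (simp add: transpose_def)

lemma ivl_Suc: "{1..Suc n} = insert (Suc n) {1..n}" by auto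

lemma rm_perm: "p permutes {1..Suc n} \<Longrightarrow> rm (Suc n) p permutes {1..n}"
  unfolding rm_def ivl_Suc by (rule permutes_insert_lemma)

lemma perm_in: "p permutes {1..m} \<Longrightarrow> i \<in> {1..m} \<Longrightarrow> p i \<in> {1..m}"
  using permutes_in_image[of p "{1..m}" i] by blast

definition Aint :: "nat \<Rightarrow> (nat \<Rightarrow> nat) \<Rightarrow> int" where
  "Aint m p = int (card (alignments m p))"

definition kk :: "nat \<Rightarrow> (nat \<Rightarrow> nat) \<Rightarrow> nat" where
  "kk m p = card (weak_excedences m p)"

definition bdi :: "nat \<Rightarrow> (nat \<Rightarrow> nat) \<Rightarrow> int" where
  "bdi m p = (int (kk m p) - 1) * (int m - int (kk m p))"

definition good :: "nat \<Rightarrow> (nat \<Rightarrow> nat) \<Rightarrow> bool" where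
  "good N p \<longleftrightarrow> p N = N \<or> (\<forall>q\<in>{1..<N}. p q = N \<longrightarrow> q \<le> p N \<and> (\<forall>j\<in>{1..<q}. p j < p N))"

lemma alu_char:
  assumes "i \<in> {1..m}" "j \<in> {1..m}" "p i \<in> {1..m}" "p j \<in> {1..m}"
  shows "alu m p i j \<longleftrightarrow> ALC p i j \<or> ALC p j i"
  using assms by (simp add: alu_def al_char)

lemma stepA:
  assumes n: "n \<ge> 1" and p: "p permutes {1..Suc n}" and pN: "p (Suc n) = Suc n"
  shows "Aint (Suc n) p - bdi (Suc n) p = Aint n (rm (Suc n) p) - bdi n (rm (Suc n) p)"
proof -
  define N where "N = Suc n"
  define I where "I = {1..n}"
  have rmp: "rm N p = p" unfolding rm_def using pN N_def by simp
  have pI: "p permutes I" using rm_perm[OF p] rmp unfolding N_def I_def by simp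
  have rI: "i \<in> I \<Longrightarrow> p i \<in> I" for i using permutes_in_image[OF pI, of i] by blast
  have NI: "N \<notin> I" "finite I" unfolding N_def I_def by auto
  have ins: "{1..N} = insert N I" unfolding N_def I_def by auto
  define F where "F i j = (of_bool (alu N p i j) :: int)" for i j
  define G where "G i j = (of_bool (alu n p i j) :: int)" for i j
  have sub: "I \<subseteq> {1..N}" unfolding I_def N_def by auto
  have FG: "F i j = G i j" if "i \<in> I" "j \<in> I" for i j
  proof -
    have pij: "p i \<in> I" "p j \<in> I" using rI that by blast+
    have "alu N p i j \<longleftrightarrow> ALC p i j \<or> ALC p j i"
      by (rule alu_char) (use sub that pij in blast)+
    moreover have "alu n p i j \<longleftrightarrow> ALC p i j \<or> ALC p j i"
      by (rule alu_char) (use that pij in \<open>simp_all add: I_def\<close>)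
    ultimately show ?thesis unfolding F_def G_def by simp
  qed
  have FN: "F j N + F N j = 2 * of_bool (p j < j)" if "j \<in> I" for j
  proof -
    have pj: "p j \<in> I" using rI that by blast
    have A1: "alu N p j N \<longleftrightarrow> ALC p j N \<or> ALC p N j"
      by (rule alu_char) (use sub that pj pN N_def in auto)
    have jN: "j < N" "p j < N" using that pj unfolding I_def N_def by auto
    have pN': "p N = N" using pN N_def by simp
    have A2: "\<not> ALC p j N" using pN' unfolding ALC_def by simp
    have A3: "ALC p N j \<longleftrightarrow> p j \<noteq> j \<and> C3 N (p j) j"
      using pN' jN unfolding ALC_def by simp
    have A4: "C3 N (p j) j \<longleftrightarrow> p j < j" using jN unfolding C3_def by auto
    have "alu N p j N \<longleftrightarrow> p j < j" using A1 A2 A3 A4 by auto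
    then show ?thesis unfolding F_def using alu_sym[of N p N j] by simp
  qed
  have "AS N p = (\<Sum>i\<in>I. \<Sum>j\<in>I. F i j) + (\<Sum>j\<in>I. F N j + F j N) + F N N"
    unfolding AS_def ins F_def by (rule sum_ins2[OF NI(2,1)])
  also have "(\<Sum>i\<in>I. \<Sum>j\<in>I. F i j) = AS n p"
    unfolding AS_def I_def[symmetric] G_def[symmetric] using FG by simp
  also have "(\<Sum>j\<in>I. F N j + F j N) = (\<Sum>j\<in>I. 2 * of_bool (p j < j))"
    using FN by (intro sum.cong) (auto simp: add.commute)
  also have "F N N = 0" unfolding F_def by (simp add: alu_irrefl)
  finally have AS1: "AS N p = AS n p + 2 * int (card {j\<in>I. p j < j})"
    using NI(2) by (simp add: sum_distrib_left[symmetric] Int_def)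
  have W1: "weak_excedences N p = insert N (weak_excedences n p)"
    unfolding weak_excedences_def N_def using pN by auto
  have W2: "weak_excedences n p \<union> {j\<in>I. p j < j} = I" "weak_excedences n p \<inter> {j\<in>I. p j < j} = {}"
    unfolding weak_excedences_def I_def by auto
  have fW: "finite (weak_excedences n p)"
    by (rule finite_subset[of _ I]) (use NI(2) in \<open>auto simp: weak_excedences_def I_def\<close>)
  have "card (weak_excedences n p \<union> {j\<in>I. p j < j}) = card (weak_excedences n p) + card {j\<in>I. p j < j}"
    by (rule card_Un_disjoint) (use fW NI(2) W2(2) in auto)
  then have "card I = card (weak_excedences n p) + card {j\<in>I. p j < j}" using W2(1) by simp
  then have c1: "int (card {j\<in>I. p j < j}) = int n - int (kk n p)"
    unfolding kk_def I_def by simp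
  have NW: "N \<notin> weak_excedences n p" unfolding weak_excedences_def N_def by auto
  have c2: "kk N p = kk n p + 1"
    unfolding kk_def W1 using NW fW by simp
  have e1: "Aint N p = Aint n p + int (card {j\<in>I. p j < j})"
    using AS1 unfolding AS_card Aint_def by simp
  have "Aint N p - bdi N p = Aint n p - bdi n p"
  proof -
    have iN: "int N = int n + 1" by (simp add: N_def)
    show ?thesis unfolding e1 bdi_def c2 iN using c1 by (simp add: algebra_simps)
  qed
  then show ?thesis using rmp unfolding N_def by simp
qed

lemma stepB:
  assumes n: "n \<ge> 1" and p: "p permutes {1..Suc n}" and pN: "p (Suc n) \<noteq> Suc n"
  shows "\<exists>D\<ge>0. Aint (Suc n) p - bdi (Suc n) p = Aint n (rm (Suc n) p) - bdi n (rm (Suc n) p) - D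
            \<and> (D = 0 \<longleftrightarrow> good (Suc n) p)"
proof -
  define N where "N = Suc n"
  define I where "I = {1..n}"
  define r where "r = p N"
  define s where "s = rm N p"
  have NI: "N \<notin> I" "finite I" unfolding N_def I_def by auto
  have ins: "{1..N} = insert N I" unfolding N_def I_def by auto
  have sub: "I \<subseteq> {1..N}" unfolding I_def N_def by auto
  have pNN: "p N \<noteq> N" using pN N_def by simp
  have pr: "i \<in> {1..N} \<Longrightarrow> p i \<in> {1..N}" for i using perm_in[OF p] N_def by simp
  have pinj: "p x = p y \<Longrightarrow> x = y" for x y using permutes_inj[OF p] by (meson injD)
  have "N \<in> p ` {1..N}" using permutes_image[OF p] N_def by auto
  then obtain q where q0: "q \<in> {1..N}" "p q = N" by (metis imageE)
  have qN: "q \<noteq> N"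
  proof
    assume "q = N" then show False using q0(2) pNN by simp
  qed
  have qI: "q \<in> I" using q0(1) qN unfolding I_def N_def by auto
  have NN: "N \<in> {1..N}" by (simp add: N_def)
  have pNr: "p N \<in> {1..N}" by (rule pr[OF NN])
  have rI: "r \<in> I" using pNr pNN unfolding r_def I_def N_def by auto
  have sI: "s permutes I" unfolding s_def N_def I_def by (rule rm_perm[OF p])
  have sq: "s q = r" unfolding s_def rm_apply r_def using q0 by simp
  have pjI: "p j \<in> I" if "j \<in> I - {q}" for j
  proof -
    have "p j \<noteq> N" using that q0 pinj by auto
    moreover have "j \<in> {1..N}" using that unfolding I_def N_def by auto
    ultimately show ?thesis using pr[of j] unfolding I_def N_def by auto
  qed
  have sj: "s j = p j" if "j \<in> I - {q}" for j
  proof -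
    have "p j \<noteq> N" using that q0 pinj by auto
    moreover have "p j \<noteq> p N" using that NI pinj by auto
    ultimately show ?thesis unfolding s_def rm_apply by simp
  qed
  have qr_sub: "I - {q} \<subseteq> I" by auto
  define F where "F i j = (of_bool (alu N p i j) :: int)" for i j
  define G where "G i j = (of_bool (alu n s i j) :: int)" for i j
  have FG: "F i j = G i j" if "i \<in> I - {q}" "j \<in> I - {q}" for i j
  proof -
    have pij: "p i \<in> I" "p j \<in> I" using pjI that by blast+
    have "alu N p i j \<longleftrightarrow> ALC p i j \<or> ALC p j i"
      by (rule alu_char) (use sub that pij in blast)+
    moreover have "alu n s i j \<longleftrightarrow> ALC s i j \<or> ALC s j i"
      by (rule alu_char) (use that pij sj in \<open>simp_all add: I_def\<close>)
    moreover have "ALC p i j = ALC s i j" "ALC p j i = ALC s j i"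
      unfolding ALC_def using sj that by simp_all
    ultimately show ?thesis unfolding F_def G_def by simp
  qed
  have Fsym: "F i j = F j i" for i j unfolding F_def by (subst alu_sym) (rule refl)
  have Gsym: "G i j = G j i" for i j unfolding G_def by (subst alu_sym) (rule refl)
  have "AS N p = (\<Sum>i\<in>I. \<Sum>j\<in>I. F i j) + (\<Sum>j\<in>I. F N j + F j N) + F N N"
    unfolding AS_def ins F_def by (rule sum_ins2[OF NI(2,1)])
  also have "F N N = 0" unfolding F_def by (simp add: alu_irrefl)
  also have "(\<Sum>i\<in>I. \<Sum>j\<in>I. F i j) = (\<Sum>i\<in>I. \<Sum>j\<in>I. G i j) + (\<Sum>i\<in>I. \<Sum>j\<in>I. F i j - G i j)"
    by (simp add: sum_subtractf)
  also have "(\<Sum>i\<in>I. \<Sum>j\<in>I. G i j) = AS n s"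
    unfolding AS_def I_def G_def by simp
  also have "(\<Sum>i\<in>I. \<Sum>j\<in>I. F i j - G i j) = 2 * (\<Sum>j\<in>I. F q j - G q j) - (F q q - G q q)"
    by (rule sum_row[OF NI(2) qI]) (use FG Fsym Gsym in auto)
  also have "F q q - G q q = 0" unfolding F_def G_def by (simp add: alu_irrefl)
  also have "(\<Sum>j\<in>I. F N j + F j N) = (\<Sum>j\<in>I. 2 * F j N)"
    using Fsym by (intro sum.cong) auto
  finally have AS0: "AS N p = AS n s + (2 * (\<Sum>j\<in>I. F q j - G q j) - 0) + (\<Sum>j\<in>I. 2 * F j N) + 0" .
  have e1: "(\<Sum>j\<in>I. F q j - G q j + F j N) = (\<Sum>j\<in>I. F q j - G q j) + (\<Sum>j\<in>I. F j N)"
    by (rule sum.distrib)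
  have e2: "(\<Sum>j\<in>I. 2 * F j N) = 2 * (\<Sum>j\<in>I. F j N)"
    by (rule sum_distrib_left[symmetric])
  have AS1: "AS N p = AS n s + 2 * (\<Sum>j\<in>I. F q j - G q j + F j N)"
    using AS0 e1 e2 by linarith
  have FqN: "F q N = 0"
  proof -
    have "alu N p q N \<longleftrightarrow> ALC p q N \<or> ALC p N q"
      by (rule alu_char) (use q0 pNr NN in auto)
    moreover have "\<not> ALC p q N" "\<not> ALC p N q" using q0 qN pNN r_def unfolding ALC_def C4_def by auto
    ultimately show ?thesis unfolding F_def by simp
  qed
  have Ysplit: "(\<Sum>j\<in>I. F q j - G q j + F j N) = (\<Sum>j\<in>I-{q}. F q j - G q j + F j N)"
    using sum.remove[OF NI(2) qI, of "\<lambda>j. F q j - G q j + F j N"] FqN Fsym[of q N]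
    unfolding F_def G_def by (simp add: alu_irrefl)
  have Yj: "F q j - G q j + F j N = of_bool (ALC p q j \<or> ALC p j q) - of_bool (ALC s q j \<or> ALC s j q)
       + of_bool (ALC p j N \<or> ALC p N j)" if j: "j \<in> I - {q}" for j
  proof -
    have pj: "p j \<in> I" using pjI j by blast
    have "alu N p q j \<longleftrightarrow> ALC p q j \<or> ALC p j q"
      by (rule alu_char) (use sub j pj qI q0 in auto)
    moreover have "alu n s q j \<longleftrightarrow> ALC s q j \<or> ALC s j q"
      by (rule alu_char) (use j pj qI rI sq sj in \<open>auto simp: I_def\<close>)
    moreover have "alu N p j N \<longleftrightarrow> ALC p j N \<or> ALC p N j"
      by (rule alu_char) (use sub j pj rI r_def NN pNr in auto)
    ultimately show ?thesis unfolding F_def G_def by simp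
  qed
  have ranges: "q < N" "r < N" "j < N" "p j < N" if "j \<in> I - {q}" for j
    using qI rI that pjI[OF that] unfolding I_def N_def by auto
  have jne: "p j \<noteq> r" if "j \<in> I - {q}" for j using that pinj NI unfolding r_def by auto
  define S where "S = {j\<in>I-{q}. j \<le> p j}"
  define T where "T = {j\<in>I-{q}. p j < j}"
  have fin: "finite (I - {q})" using NI by simp
  have ST: "card S + card T = n - 1"
  proof -
    have "card (S \<union> T) = card S + card T"
      by (rule card_Un_disjoint) (use fin in \<open>auto simp: S_def T_def\<close>)
    moreover have "S \<union> T = I - {q}" unfolding S_def T_def by auto
    ultimately show ?thesis using qI NI unfolding I_def by simp
  qed
  have xN: "x \<noteq> N" if "x \<le> p x" for x
  proof
    assume "x = N" then show False using that pNr pNN by auto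
  qed
  have xN: "x \<noteq> Suc n" if "x \<le> p x" for x using xN[OF that] N_def by simp
  have WN: "weak_excedences N p = insert q S"
    unfolding weak_excedences_def S_def using q0 qN pNN r_def rI unfolding I_def N_def
    by (auto dest: xN simp: le_Suc_eq)
  have qS: "q \<notin> S" unfolding S_def by simp
  have fS: "finite S" unfolding S_def using fin by simp
  have kN: "kk N p = card S + 1" unfolding kk_def WN using qS fS by simp
  have Aeq: "Aint N p = Aint n s + (\<Sum>j\<in>I-{q}. F q j - G q j + F j N)"
    using AS1 Ysplit unfolding AS_card Aint_def by simp
  have iN: "int N = int n + 1" by (simp add: N_def)
  show ?thesis
  proof (cases "q \<le> r")
    case True
    define Bd where "Bd = {j\<in>I-{q}. j < q \<and> r < p j}"
    have "(\<Sum>j\<in>I-{q}. F q j - G q j + F j N) = (\<Sum>j\<in>I-{q}. of_bool (j \<le> p j) - 2 * of_bool (j<q \<and> r < p j))"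
    proof (rule sum.cong[OF refl])
      fix j assume j: "j \<in> I - {q}"
      show "F q j - G q j + F j N = of_bool (j \<le> p j) - 2 * of_bool (j<q \<and> r < p j)"
        unfolding Yj[OF j]
        by (rule B2) (use j True ranges[OF j] jne[OF j] q0 sq sj[OF j] r_def in auto)
    qed
    also have "\<dots> = int (card S) - 2 * int (card Bd)"
      using fin by (simp add: sum_subtractf sum_distrib_left[symmetric] S_def Bd_def Int_def)
    finally have Y: "(\<Sum>j\<in>I-{q}. F q j - G q j + F j N) = int (card S) - 2 * int (card Bd)" .
    have Ws: "weak_excedences n s = insert q S"
      unfolding weak_excedences_def S_def using sq True qI sj unfolding I_def by auto
    have ks: "kk n s = card S + 1" unfolding kk_def Ws using qS fS by simp
    have good_iff: "good N p \<longleftrightarrow> Bd = {}"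
    proof
      assume g: "good N p"
      have "\<forall>j\<in>{1..<q}. p j < r" using g pNN q0 qN unfolding good_def r_def by auto
      then show "Bd = {}" unfolding Bd_def I_def by force
    next
      assume b: "Bd = {}"
      have "\<forall>j\<in>{1..<q}. p j < r"
      proof
        fix j assume "j \<in> {1..<q}"
        then have j: "j \<in> I - {q}" "j < q" using qI unfolding I_def by auto
        then have "\<not> r < p j" using b unfolding Bd_def by auto
        then show "p j < r" using jne[OF j(1)] by simp
      qed
      then show "good N p" unfolding good_def r_def using True q0 pinj r_def
        by (metis atLeastLessThan_iff)
    qed
    have fB: "finite Bd" unfolding Bd_def using fin by simp
    show ?thesis
    proof (intro exI[of _ "2 * int (card Bd)"] conjI)
      show "Aint (Suc n) p - bdi (Suc n) p = Aint n (rm (Suc n) p) - bdi n (rm (Suc n) p) - 2 * int (card Bd)"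
        using Aeq Y unfolding N_def[symmetric] s_def[symmetric] bdi_def kN ks iN
        by (simp add: algebra_simps)
      show "(2 * int (card Bd) = 0) = good (Suc n) p"
        using good_iff fB unfolding N_def by simp
    qed simp
  next
    case False
    define Bd where "Bd = {j\<in>I-{q}. q < j \<and> p j < r}"
    have "(\<Sum>j\<in>I-{q}. F q j - G q j + F j N) = (\<Sum>j\<in>I-{q}. of_bool (p j < j) - 2 * of_bool (q<j \<and> p j < r))"
    proof (rule sum.cong[OF refl])
      fix j assume j: "j \<in> I - {q}"
      show "F q j - G q j + F j N = of_bool (p j < j) - 2 * of_bool (q<j \<and> p j < r)"
        unfolding Yj[OF j]
        by (rule B1) (use j False ranges[OF j] jne[OF j] q0 sq sj[OF j] r_def in auto)
    qed
    also have "\<dots> = int (card T) - 2 * int (card Bd)"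
      using fin by (simp add: sum_subtractf sum_distrib_left[symmetric] T_def Bd_def Int_def)
    finally have Y: "(\<Sum>j\<in>I-{q}. F q j - G q j + F j N) = int (card T) - 2 * int (card Bd)" .
    have rq: "\<not> q \<le> r" using False .
    have Ws: "weak_excedences n s = S"
    proof (rule set_eqI)
      fix x
      show "x \<in> weak_excedences n s \<longleftrightarrow> x \<in> S"
      proof (cases "x = q")
        case True then show ?thesis using rq sq unfolding weak_excedences_def S_def by auto
      next
        case xq: False
        show ?thesis
        proof (cases "x \<in> I")
          case xI: True
          then have "s x = p x" using sj xq by auto
          then show ?thesis using xI xq unfolding weak_excedences_def S_def I_def by auto
        next
          case xI: False
          then show ?thesis unfolding weak_excedences_def S_def I_def by auto
        qed
      qed
    qed
    have ks: "kk n s = card S" unfolding kk_def Ws by simp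
    have ng: "\<not> good N p" unfolding good_def r_def using False q0 qN pNN r_def by auto
    have n1: "n \<ge> 1" by (rule n)
    have cT: "int (card T) = int n - 1 - int (card S)" using ST n1 by simp
    show ?thesis
    proof (intro exI[of _ "1 + 2 * int (card Bd)"] conjI)
      show "Aint (Suc n) p - bdi (Suc n) p = Aint n (rm (Suc n) p) - bdi n (rm (Suc n) p) - (1 + 2 * int (card Bd))"
        using Aeq Y cT unfolding N_def[symmetric] s_def[symmetric] bdi_def kN ks iN
        by (simp add: algebra_simps)
      show "(1 + 2 * int (card Bd) = 0) = good (Suc n) p"
        using ng unfolding N_def by simp
    qed simp
  qed
qed

lemma base1:
  assumes "p permutes {1..1::nat}"
  shows "p = id" "Aint 1 p = 0" "bdi 1 p = 0"
proof -
  show pid: "p = id" using assms by simp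
  have "alignments 1 p = {}" unfolding alignments_def aligned_def by auto
  then show "Aint 1 p = 0" unfolding Aint_def by simp
  have "weak_excedences 1 p = {1}" unfolding weak_excedences_def pid by auto
  then show "bdi 1 p = 0" unfolding bdi_def kk_def by simp
qed

lemma step_le:
  assumes "n \<ge> 1" "p permutes {1..Suc n}"
  shows "Aint (Suc n) p - bdi (Suc n) p \<le> Aint n (rm (Suc n) p) - bdi n (rm (Suc n) p)"
    "Aint (Suc n) p - bdi (Suc n) p = Aint n (rm (Suc n) p) - bdi n (rm (Suc n) p) \<longleftrightarrow> good (Suc n) p"
proof -
  have "\<exists>D\<ge>0. Aint (Suc n) p - bdi (Suc n) p = Aint n (rm (Suc n) p) - bdi n (rm (Suc n) p) - D
            \<and> (D = 0 \<longleftrightarrow> good (Suc n) p)"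
  proof (cases "p (Suc n) = Suc n")
    case True
    then show ?thesis using stepA[OF assms True] unfolding good_def by (intro exI[of _ 0]) auto
  next
    case False
    then show ?thesis using stepB[OF assms False] by blast
  qed
  then obtain D where "D \<ge> 0" "Aint (Suc n) p - bdi (Suc n) p = Aint n (rm (Suc n) p) - bdi n (rm (Suc n) p) - D"
     "D = 0 \<longleftrightarrow> good (Suc n) p" by blast
  then show "Aint (Suc n) p - bdi (Suc n) p \<le> Aint n (rm (Suc n) p) - bdi n (rm (Suc n) p)"
    "Aint (Suc n) p - bdi (Suc n) p = Aint n (rm (Suc n) p) - bdi n (rm (Suc n) p) \<longleftrightarrow> good (Suc n) p"
    by auto
qed

lemma bound:
  assumes "n \<ge> 1" "p permutes {1..n}"
  shows "Aint n p \<le> bdi n p"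
  using assms
proof (induction n arbitrary: p rule: nat_induct_at_least)
  case base
  then show ?case using base1(2)[of p] base1(3)[of p] by (simp add: id_def)
next
  case (Suc n)
  have "Aint (Suc n) p - bdi (Suc n) p \<le> Aint n (rm (Suc n) p) - bdi n (rm (Suc n) p)"
    by (rule step_le(1)[OF Suc.hyps(1) Suc.prems])
  moreover have "Aint n (rm (Suc n) p) \<le> bdi n (rm (Suc n) p)"
    by (rule Suc.IH[OF rm_perm[OF Suc.prems]])
  ultimately show ?case by simp
qed

definition tight :: "nat \<Rightarrow> (nat \<Rightarrow> nat) \<Rightarrow> bool" where
  "tight n p \<longleftrightarrow> p permutes {1..n} \<and> Aint n p = bdi n p"

lemma tight_iff:
  assumes "n \<ge> 1" "p permutes {1..Suc n}"
  shows "tight (Suc n) p \<longleftrightarrow> tight n (rm (Suc n) p) \<and> good (Suc n) p"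
proof -
  have r: "rm (Suc n) p permutes {1..n}" by (rule rm_perm[OF assms(2)])
  have b: "Aint n (rm (Suc n) p) \<le> bdi n (rm (Suc n) p)" by (rule bound[OF assms(1) r])
  show ?thesis using step_le[OF assms] b r assms(2) unfolding tight_def by linarith
qed

lemma tight_nat:
  assumes "n \<ge> 1" "p permutes {1..n}"
  shows "card (alignments n p) = (card (weak_excedences n p) - 1) * (n - card (weak_excedences n p))
     \<longleftrightarrow> tight n p"
proof -
  have "1 \<in> weak_excedences n p" using perm_in[OF assms(2), of 1] assms(1)
    unfolding weak_excedences_def by auto
  moreover have fW: "finite (weak_excedences n p)" unfolding weak_excedences_def by simp
  ultimately have k1: "card (weak_excedences n p) \<ge> 1"
    by (metis One_nat_def card_0_eq empty_iff less_one not_less)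
  have "weak_excedences n p \<subseteq> {1..n}" unfolding weak_excedences_def by auto
  then have k2: "card (weak_excedences n p) \<le> n" by (metis card_atLeastAtMost card_mono diff_Suc_1 finite_atLeastAtMost)
  have "int ((card (weak_excedences n p) - 1) * (n - card (weak_excedences n p))) = bdi n p"
    unfolding bdi_def kk_def using k1 k2 by (simp add: of_nat_diff)
  then show ?thesis unfolding tight_def Aint_def using assms(2) by linarith
qed

definition LR :: "nat \<Rightarrow> (nat \<Rightarrow> nat) \<Rightarrow> nat set" where
  "LR n p = {q\<in>{1..n}. q \<le> p q \<and> (\<forall>j\<in>{1..<q}. p j < p q)}"

definition lrm :: "nat \<Rightarrow> (nat \<Rightarrow> nat) \<Rightarrow> nat" where
  "lrm n p = card (LR n p)"

definition ins :: "nat \<Rightarrow> (nat \<Rightarrow> nat) \<Rightarrow> nat \<Rightarrow> nat \<Rightarrow> nat" where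
  "ins N s q = s \<circ> transpose q N"

lemma finLR: "finite (LR n p)" unfolding LR_def by simp

lemma LR_sub: "LR n p \<subseteq> {1..n}" unfolding LR_def by auto

lemma lrm_le: "lrm n p \<le> n"
  unfolding lrm_def using card_mono[OF _ LR_sub, of n p] by simp

lemma lrm_ge1: assumes "n \<ge> 1" "p permutes {1..n}" shows "lrm n p \<ge> 1"
proof -
  have "1 \<in> LR n p" unfolding LR_def using perm_in[OF assms(2), of 1] assms(1) by auto
  then show ?thesis unfolding lrm_def using finLR[of n p]
    by (metis One_nat_def Suc_leI card_gt_0_iff empty_iff)
qed

lemma LR_fix:
  assumes "p permutes {1..n}"
  shows "LR (Suc n) p = insert (Suc n) (LR n p)"
proof -
  have pN: "p (Suc n) = Suc n" using permutes_not_in[OF assms] by simp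
  have pj: "j \<in> {1..n} \<Longrightarrow> p j \<in> {1..n}" for j using perm_in[OF assms] by simp
  show ?thesis
  proof (rule set_eqI)
    fix x
    show "x \<in> LR (Suc n) p \<longleftrightarrow> x \<in> insert (Suc n) (LR n p)"
    proof (cases "x = Suc n")
      case True
      have "\<forall>j\<in>{1..<Suc n}. p j < p (Suc n)" using pj pN by fastforce
      then show ?thesis using True pN unfolding LR_def by auto
    next
      case False
      then show ?thesis unfolding LR_def by auto
    qed
  qed
qed

lemma lrm_fix:
  assumes "p permutes {1..n}"
  shows "lrm (Suc n) p = lrm n p + 1"
proof -
  have "Suc n \<notin> LR n p" using LR_sub by fastforce
  then show ?thesis unfolding lrm_def LR_fix[OF assms] using finLR by simp
qed

lemma rm_fix:
  assumes "p permutes {1..n}"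
  shows "rm (Suc n) p = p"
  using permutes_not_in[OF assms, of "Suc n"] unfolding rm_def by simp

lemma ins_apply:
  "ins N s q i = (if i = q then s N else if i = N then s q else s i)"
  unfolding ins_def by (simp add: transpose_def)

lemma ins_facts:
  assumes s: "s permutes {1..n}" and q: "q \<in> {1..n}"
  shows "ins (Suc n) s q permutes {1..Suc n}"
    "ins (Suc n) s q q = Suc n"
    "ins (Suc n) s q (Suc n) = s q"
    "rm (Suc n) (ins (Suc n) s q) = s"
proof -
  have sN: "s (Suc n) = Suc n" using permutes_not_in[OF s] by simp
  have s1: "s permutes {1..Suc n}" by (rule permutes_subset[OF s]) auto
  show "ins (Suc n) s q permutes {1..Suc n}" unfolding ins_def
    by (rule permutes_compose[OF permutes_swap_id s1]) (use q in auto)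
  show qq: "ins (Suc n) s q q = Suc n" unfolding ins_apply using sN by simp
  have qN: "q \<noteq> Suc n" using q by auto
  show NN: "ins (Suc n) s q (Suc n) = s q" unfolding ins_apply using qN by simp
  have sq: "s q \<in> {1..n}" using perm_in[OF s q] .
  have sinj: "s x = s y \<Longrightarrow> x = y" for x y using permutes_inj[OF s] by (meson injD)
  show "rm (Suc n) (ins (Suc n) s q) = s"
  proof
    fix i
    show "rm (Suc n) (ins (Suc n) s q) i = s i"
    proof (cases "i = q")
      case True then show ?thesis unfolding rm_apply using qq NN by simp
    next
      case iq: False
      show ?thesis
      proof (cases "i = Suc n")
        case True then show ?thesis unfolding rm_apply using iq qN NN sq sN by (simp add: ins_apply)
      next
        case iN: False
        have "s i \<noteq> Suc n" using iN sN sinj by metis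
        moreover have "s i \<noteq> s q" using iq sinj by metis
        ultimately show ?thesis unfolding rm_apply using iq iN NN by (simp add: ins_apply)
      qed
    qed
  qed
qed

lemma ins_rm:
  assumes p: "p permutes {1..Suc n}" and pq: "p q = Suc n" and qN: "q \<noteq> Suc n"
  shows "ins (Suc n) (rm (Suc n) p) q = p"
proof
  fix i
  have pinj: "p x = p y \<Longrightarrow> x = y" for x y using permutes_inj[OF p] by (meson injD)
  have pN: "p (Suc n) \<noteq> Suc n" using pq qN pinj by metis
  show "ins (Suc n) (rm (Suc n) p) q i = p i"
  proof (cases "i = q")
    case True then show ?thesis unfolding ins_apply rm_apply using pq pN by simp
  next
    case iq: False
    show ?thesis
    proof (cases "i = Suc n")
      case True then show ?thesis unfolding ins_apply rm_apply using pq pN iq by simp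
    next
      case iN: False
      have "p i \<noteq> Suc n" using iq pq pinj by metis
      moreover have "p i \<noteq> p (Suc n)" using iN pinj by metis
      ultimately show ?thesis unfolding ins_apply rm_apply using iq iN by simp
    qed
  qed
qed

lemma LR_ins:
  assumes s: "s permutes {1..n}" and q: "q \<in> {1..n}"
  shows "LR (Suc n) (ins (Suc n) s q) = insert q {x\<in>LR n s. x < q}"
proof -
  let ?p = "ins (Suc n) s q"
  have sN: "s (Suc n) = Suc n" using permutes_not_in[OF s] by simp
  have sj: "j \<in> {1..n} \<Longrightarrow> s j \<in> {1..n}" for j using perm_in[OF s] by simp
  have qN: "q \<noteq> Suc n" using q by auto
  have pq: "?p q = Suc n" and pN: "?p (Suc n) = s q" using ins_facts[OF s q] by auto
  have po: "i \<noteq> q \<Longrightarrow> i \<noteq> Suc n \<Longrightarrow> ?p i = s i" for i unfolding ins_apply by simp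
  show ?thesis
  proof (rule set_eqI)
    fix x
    show "x \<in> LR (Suc n) ?p \<longleftrightarrow> x \<in> insert q {x\<in>LR n s. x < q}"
    proof (cases "x = q")
      case True
      have "\<forall>j\<in>{1..<q}. ?p j < ?p q"
      proof
        fix j assume j: "j \<in> {1..<q}"
        then have "?p j = s j" using po[of j] q by auto
        then show "?p j < ?p q" using sj[of j] j q pq by auto
      qed
      then show ?thesis using True q pq unfolding LR_def by auto
    next
      case xq: False
      show ?thesis
      proof (cases "x = Suc n")
        case True
        have "\<not> x \<le> ?p x" using True pN sj[OF q] by auto
        then show ?thesis using True xq q unfolding LR_def by auto
      next
        case xN: False
        show ?thesis
        proof (cases "x < q")
          case True
          have "(\<forall>j\<in>{1..<x}. ?p j < ?p x) \<longleftrightarrow> (\<forall>j\<in>{1..<x}. s j < s x)"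
            using po True xN q by auto
          then show ?thesis using True xq xN po[OF xq xN] q unfolding LR_def by auto
        next
          case False
          then have "q \<in> {1..<x}" using xq q by auto
          moreover have "x \<in> {1..Suc n} \<Longrightarrow> ?p x < ?p q" using po[OF xq xN] pq sj[of x] xN by auto
          ultimately have "x \<notin> LR (Suc n) ?p"
          proof -
            assume a1: "q \<in> {1..<x}" and a2: "x \<in> {1..Suc n} \<Longrightarrow> ?p x < ?p q"
            show "x \<notin> LR (Suc n) ?p"
            proof
              assume "x \<in> LR (Suc n) ?p"
              then have "x \<in> {1..Suc n}" "\<forall>j\<in>{1..<x}. ?p j < ?p x" unfolding LR_def by auto
              then show False using a1 a2 by fastforce
            qed
          qed
          then show ?thesis using False xq by auto
        qed
      qed
    qed
  qed
qed

lemma good_ins: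
  assumes s: "s permutes {1..n}" and q: "q \<in> {1..n}"
  shows "good (Suc n) (ins (Suc n) s q) \<longleftrightarrow> q \<in> LR n s"
proof -
  let ?p = "ins (Suc n) s q"
  have pq: "?p q = Suc n" and pN: "?p (Suc n) = s q" using ins_facts[OF s q] by auto
  have sq: "s q \<in> {1..n}" using perm_in[OF s q] .
  have po: "i \<noteq> q \<Longrightarrow> i \<noteq> Suc n \<Longrightarrow> ?p i = s i" for i unfolding ins_apply by simp
  have pinj: "?p x = ?p y \<Longrightarrow> x = y" for x y
    using permutes_inj[OF ins_facts(1)[OF s q]] by (meson injD)
  have u: "\<And>q'. ?p q' = Suc n \<Longrightarrow> q' = q" using pinj pq by metis
  have qS: "q \<in> {1..<Suc n}" using q by auto
  have "good (Suc n) ?p \<longleftrightarrow> (\<forall>q'\<in>{1..<Suc n}. ?p q' = Suc n \<longrightarrow> q' \<le> s q \<and> (\<forall>j\<in>{1..<q'}. ?p j < s q))"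
    unfolding good_def using pN sq by auto
  also have "\<dots> \<longleftrightarrow> q \<le> s q \<and> (\<forall>j\<in>{1..<q}. ?p j < s q)"
  proof
    assume "\<forall>q'\<in>{1..<Suc n}. ?p q' = Suc n \<longrightarrow> q' \<le> s q \<and> (\<forall>j\<in>{1..<q'}. ?p j < s q)"
    then show "q \<le> s q \<and> (\<forall>j\<in>{1..<q}. ?p j < s q)" using qS pq by blast
  next
    assume "q \<le> s q \<and> (\<forall>j\<in>{1..<q}. ?p j < s q)"
    then show "\<forall>q'\<in>{1..<Suc n}. ?p q' = Suc n \<longrightarrow> q' \<le> s q \<and> (\<forall>j\<in>{1..<q'}. ?p j < s q)"
      using u by blast
  qed
  also have "(\<forall>j\<in>{1..<q}. ?p j < s q) \<longleftrightarrow> (\<forall>j\<in>{1..<q}. s j < s q)"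
    using po q by auto
  finally show ?thesis unfolding LR_def using q by auto
qed

lemma rank_bij:
  fixes L :: "nat set"
  assumes "finite L"
  shows "inj_on (\<lambda>q. card {x\<in>L. x < q}) L" "(\<lambda>q. card {x\<in>L. x < q}) ` L = {0..<card L}"
proof -
  have lt: "card {x\<in>L. x < a} < card {x\<in>L. x < b}" if ab: "a \<in> L" "a < b" for a b
  proof (rule psubset_card_mono)
    show "finite {x\<in>L. x < b}" using assms by simp
    show "{x\<in>L. x < a} \<subset> {x\<in>L. x < b}"
    proof (rule psubsetI)
      show "{x\<in>L. x < a} \<subseteq> {x\<in>L. x < b}" using ab(2) by auto
      have "a \<in> {x\<in>L. x < b}" using ab by simp
      moreover have "a \<notin> {x\<in>L. x < a}" by simp
      ultimately show "{x\<in>L. x < a} \<noteq> {x\<in>L. x < b}" by blast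
    qed
  qed
  show inj: "inj_on (\<lambda>q. card {x\<in>L. x < q}) L"
  proof (rule inj_onI)
    fix a b assume a: "a \<in> L" and b: "b \<in> L" and e: "card {x\<in>L. x < a} = card {x\<in>L. x < b}"
    show "a = b"
    proof (rule ccontr)
      assume "a \<noteq> b"
      then consider "a < b" | "b < a" by linarith
      then show False
      proof cases
        case 1 then show False using lt[OF a 1] e by simp
      next
        case 2 then show False using lt[OF b 2] e by simp
      qed
    qed
  qed
  have sub: "(\<lambda>q. card {x\<in>L. x < q}) ` L \<subseteq> {0..<card L}"
  proof
    fix y assume "y \<in> (\<lambda>q. card {x\<in>L. x < q}) ` L"
    then obtain a where a: "a \<in> L" "y = card {x\<in>L. x < a}" by auto
    have "{x\<in>L. x < a} \<subset> L"
    proof (rule psubsetI)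
      show "{x\<in>L. x < a} \<subseteq> L" by auto
      have "a \<notin> {x\<in>L. x < a}" by simp
      then show "{x\<in>L. x < a} \<noteq> L" using a(1) by blast
    qed
    then have "card {x\<in>L. x < a} < card L" by (rule psubset_card_mono[OF assms])
    then show "y \<in> {0..<card L}" using a(2) by simp
  qed
  have "card ((\<lambda>q. card {x\<in>L. x < q}) ` L) = card L"
    by (rule card_image[OF inj])
  then have "card ((\<lambda>q. card {x\<in>L. x < q}) ` L) = card {0..<card L}" by simp
  then show "(\<lambda>q. card {x\<in>L. x < q}) ` L = {0..<card L}"
    using sub by (simp add: card_subset_eq)
qed

definition PP :: "nat \<Rightarrow> (nat \<Rightarrow> nat) set" where
  "PP n = {p. tight n p}"

definition rk :: "nat \<Rightarrow> (nat \<Rightarrow> nat) \<Rightarrow> nat \<Rightarrow> nat" where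
  "rk n s q = card {x\<in>LR n s. x < q}"

lemma finPP: "finite (PP n)"
proof (rule finite_subset[of _ "{p. p permutes {1..n}}"])
  show "PP n \<subseteq> {p. p permutes {1..n}}" unfolding PP_def tight_def by auto
  show "finite {p. p permutes {1..n}}" by (rule finite_permutations) simp
qed

lemma PP_perm: "p \<in> PP n \<Longrightarrow> p permutes {1..n}" unfolding PP_def tight_def by simp

lemma decomp:
  assumes n: "n \<ge> 1" and p: "p \<in> PP (Suc n)"
  shows "rm (Suc n) p \<in> PP n"
    "(p = rm (Suc n) p \<and> lrm (Suc n) p = lrm n (rm (Suc n) p) + 1) \<or>
     (\<exists>q\<in>LR n (rm (Suc n) p). p = ins (Suc n) (rm (Suc n) p) q \<and> lrm (Suc n) p = rk n (rm (Suc n) p) q + 1)"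
proof -
  let ?s = "rm (Suc n) p"
  have pp: "p permutes {1..Suc n}" using PP_perm[OF p] .
  have t: "tight n ?s" "good (Suc n) p" using tight_iff[OF n pp] p unfolding PP_def by auto
  then show "?s \<in> PP n" unfolding PP_def by simp
  have sp: "?s permutes {1..n}" by (rule rm_perm[OF pp])
  show "(p = ?s \<and> lrm (Suc n) p = lrm n ?s + 1) \<or>
     (\<exists>q\<in>LR n ?s. p = ins (Suc n) ?s q \<and> lrm (Suc n) p = rk n ?s q + 1)"
  proof (cases "p (Suc n) = Suc n")
    case True
    then have "?s = p" unfolding rm_def by simp
    then show ?thesis using lrm_fix[OF sp] by simp
  next
    case False
    have "Suc n \<in> p ` {1..Suc n}" using permutes_image[OF pp] by auto
    then obtain q where q: "q \<in> {1..Suc n}" "p q = Suc n" by auto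
    have qN: "q \<noteq> Suc n" using q False by auto
    have qI: "q \<in> {1..n}" using q qN by auto
    have pe: "ins (Suc n) ?s q = p" by (rule ins_rm[OF pp q(2) qN])
    have qL: "q \<in> LR n ?s" using good_ins[OF sp qI] pe t(2) by simp
    have lq: "lrm (Suc n) p = rk n ?s q + 1"
    proof -
      have "lrm (Suc n) p = card (insert q {x\<in>LR n ?s. x < q})"
        unfolding lrm_def using LR_ins[OF sp qI] pe by simp
      also have "\<dots> = rk n ?s q + 1" unfolding rk_def using finLR[of n ?s] by simp
      finally show ?thesis .
    qed
    show ?thesis using qL lq pe[symmetric] by blast
  qed
qed

lemma ext_fix:
  assumes n: "n \<ge> 1" and s: "s \<in> PP n"
  shows "s \<in> PP (Suc n)" "rm (Suc n) s = s" "lrm (Suc n) s = lrm n s + 1"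
proof -
  have sp: "s permutes {1..n}" using PP_perm[OF s] .
  have sp1: "s permutes {1..Suc n}" by (rule permutes_subset[OF sp]) auto
  show r: "rm (Suc n) s = s" by (rule rm_fix[OF sp])
  have g: "good (Suc n) s" unfolding good_def using permutes_not_in[OF sp, of "Suc n"] by simp
  show "s \<in> PP (Suc n)" using tight_iff[OF n sp1] r g s unfolding PP_def by simp
  show "lrm (Suc n) s = lrm n s + 1" by (rule lrm_fix[OF sp])
qed

lemma ext_ins:
  assumes n: "n \<ge> 1" and s: "s \<in> PP n" and q: "q \<in> LR n s"
  shows "ins (Suc n) s q \<in> PP (Suc n)" "rm (Suc n) (ins (Suc n) s q) = s"
     "lrm (Suc n) (ins (Suc n) s q) = rk n s q + 1"
proof -
  have sp: "s permutes {1..n}" using PP_perm[OF s] .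
  have qI: "q \<in> {1..n}" using q LR_sub by blast
  note f = ins_facts[OF sp qI]
  show r: "rm (Suc n) (ins (Suc n) s q) = s" by (rule f(4))
  have g: "good (Suc n) (ins (Suc n) s q)" using good_ins[OF sp qI] q by simp
  show "ins (Suc n) s q \<in> PP (Suc n)" using tight_iff[OF n f(1)] r g s unfolding PP_def by simp
  have "lrm (Suc n) (ins (Suc n) s q) = card (insert q {x\<in>LR n s. x < q})"
    unfolding lrm_def using LR_ins[OF sp qI] by simp
  also have "\<dots> = rk n s q + 1" unfolding rk_def using finLR[of n s] by simp
  finally show "lrm (Suc n) (ins (Suc n) s q) = rk n s q + 1" .
qed

lemma rk_lt: "q \<in> LR n s \<Longrightarrow> rk n s q < lrm n s"
  using rank_bij(2)[OF finLR[of n s]] unfolding rk_def lrm_def by auto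

lemma rk_inj: "q1 \<in> LR n s \<Longrightarrow> q2 \<in> LR n s \<Longrightarrow> rk n s q1 = rk n s q2 \<Longrightarrow> q1 = q2"
  using rank_bij(1)[OF finLR[of n s]] unfolding rk_def inj_on_def by blast

lemma rk_surj: "k < lrm n s \<Longrightarrow> \<exists>q\<in>LR n s. rk n s q = k"
  using rank_bij(2)[OF finLR[of n s]] unfolding rk_def lrm_def
  by (metis (no_types, lifting) atLeastLessThan_iff imageE zero_le)

lemma fiber:
  assumes n: "n \<ge> 1" and t: "t \<ge> 1"
  shows "bij_betw (rm (Suc n)) {p\<in>PP (Suc n). lrm (Suc n) p = t} {s\<in>PP n. t \<le> lrm n s + 1}"
  unfolding bij_betw_def
proof
  show "inj_on (rm (Suc n)) {p\<in>PP (Suc n). lrm (Suc n) p = t}"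
  proof (rule inj_onI)
    fix p1 p2 assume p1: "p1 \<in> {p\<in>PP (Suc n). lrm (Suc n) p = t}" and p2: "p2 \<in> {p\<in>PP (Suc n). lrm (Suc n) p = t}"
      and e: "rm (Suc n) p1 = rm (Suc n) p2"
    define s where "s = rm (Suc n) p2"
    have d1: "(p1 = s \<and> lrm (Suc n) p1 = lrm n s + 1) \<or>
     (\<exists>q\<in>LR n s. p1 = ins (Suc n) s q \<and> lrm (Suc n) p1 = rk n s q + 1)"
      using decomp(2)[OF n, of p1] p1 e unfolding s_def by auto
    have d2: "(p2 = s \<and> lrm (Suc n) p2 = lrm n s + 1) \<or>
     (\<exists>q\<in>LR n s. p2 = ins (Suc n) s q \<and> lrm (Suc n) p2 = rk n s q + 1)"
      using decomp(2)[OF n, of p2] p2 unfolding s_def by auto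
    have l: "lrm (Suc n) p1 = lrm (Suc n) p2" using p1 p2 by simp
    show "p1 = p2" using d1 d2 l rk_lt rk_inj by (metis add_right_cancel less_irrefl)
  qed
  show "rm (Suc n) ` {p\<in>PP (Suc n). lrm (Suc n) p = t} = {s\<in>PP n. t \<le> lrm n s + 1}"
  proof
    show "rm (Suc n) ` {p\<in>PP (Suc n). lrm (Suc n) p = t} \<subseteq> {s\<in>PP n. t \<le> lrm n s + 1}"
    proof
      fix s assume "s \<in> rm (Suc n) ` {p\<in>PP (Suc n). lrm (Suc n) p = t}"
      then obtain p where p: "p \<in> PP (Suc n)" "lrm (Suc n) p = t" "s = rm (Suc n) p" by auto
      have "s \<in> PP n" using decomp(1)[OF n p(1)] p(3) by simp
      moreover have "t \<le> lrm n s + 1" using decomp(2)[OF n p(1)] p rk_lt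
        by (metis add_le_mono1 less_imp_le_nat order_refl)
      ultimately show "s \<in> {s\<in>PP n. t \<le> lrm n s + 1}" by simp
    qed
    show "{s\<in>PP n. t \<le> lrm n s + 1} \<subseteq> rm (Suc n) ` {p\<in>PP (Suc n). lrm (Suc n) p = t}"
    proof
      fix s assume s: "s \<in> {s\<in>PP n. t \<le> lrm n s + 1}"
      show "s \<in> rm (Suc n) ` {p\<in>PP (Suc n). lrm (Suc n) p = t}"
      proof (cases "t = lrm n s + 1")
        case True
        then show ?thesis using ext_fix[OF n, of s] s by (intro image_eqI[of _ _ s]) auto
      next
        case False
        then have "t - 1 < lrm n s" using s t by auto
        then obtain q where q: "q \<in> LR n s" "rk n s q = t - 1" using rk_surj by blast
        show ?thesis using ext_ins[OF n _ q(1)] s q(2) t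
          by (intro image_eqI[of _ _ "ins (Suc n) s q"]) auto
      qed
    qed
  qed
qed

definition Ec :: "nat \<Rightarrow> nat \<Rightarrow> nat" where "Ec n t = card {p\<in>PP n. lrm n p = t}"
definition Tc :: "nat \<Rightarrow> nat \<Rightarrow> nat" where "Tc n t = card {p\<in>PP n. t \<le> lrm n p}"
definition ff :: "nat \<Rightarrow> nat \<Rightarrow> int" where
  "ff n t = int ((2*n - t) choose n) - int ((2*n - t) choose Suc n)"

lemma E_rec:
  assumes "n \<ge> 1" "t \<ge> 1"
  shows "Ec (Suc n) t = Tc n (t - 1)"
proof -
  have "Ec (Suc n) t = card {s\<in>PP n. t \<le> lrm n s + 1}"
    unfolding Ec_def by (rule bij_betw_same_card[OF fiber[OF assms]])
  also have "{s\<in>PP n. t \<le> lrm n s + 1} = {s\<in>PP n. t - 1 \<le> lrm n s}" using assms(2) by auto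
  finally show ?thesis unfolding Tc_def .
qed

lemma T_split: "Tc m t = Ec m t + Tc m (Suc t)"
proof -
  have "{p\<in>PP m. t \<le> lrm m p} = {p\<in>PP m. lrm m p = t} \<union> {p\<in>PP m. Suc t \<le> lrm m p}" by auto
  moreover have "card ({p\<in>PP m. lrm m p = t} \<union> {p\<in>PP m. Suc t \<le> lrm m p}) =
      card {p\<in>PP m. lrm m p = t} + card {p\<in>PP m. Suc t \<le> lrm m p}"
    by (rule card_Un_disjoint) (use finPP[of m] in auto)
  ultimately show ?thesis unfolding Tc_def Ec_def by simp
qed

lemma T_zero: "m < t \<Longrightarrow> Tc m t = 0"
  unfolding Tc_def using lrm_le[of m] by (metis (no_types, lifting) card.empty empty_Collect_eq le_trans not_le)

lemma T01: "m \<ge> 1 \<Longrightarrow> Tc m 0 = Tc m 1"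
  unfolding Tc_def using lrm_ge1 PP_perm by (metis (no_types, lifting) le0)

lemma T0: "Tc m 0 = card (PP m)" unfolding Tc_def by simp

lemma PP1: "PP 1 = {id}"
proof -
  have "id \<in> PP 1" unfolding PP_def tight_def using base1[of id] by simp
  moreover have "p \<in> PP 1 \<Longrightarrow> p = id" for p using PP_perm[of p 1] by simp
  ultimately show ?thesis by blast
qed

lemma T11: "Tc 1 1 = 1"
proof -
  have "Tc 1 1 = Tc 1 0" using T01[of 1] by simp
  then show ?thesis using T0 PP1 by simp
qed

lemma I1:
  assumes "2 \<le> t" "t \<le> n + 1"
  shows "ff n (t - 1) + ff (Suc n) (Suc t) = ff (Suc n) t"
proof -
  define m where "m = 2*n + 1 - t"
  have a: "2*n - (t - 1) = m" "2 * Suc n - Suc t = m" "2 * Suc n - t = Suc m"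
    using assms unfolding m_def by auto
  show ?thesis unfolding ff_def a by simp
qed

lemma I2:
  assumes "n \<ge> 1"
  shows "ff n 1 + ff (Suc n) 2 = ff (Suc n) 1"
proof -
  obtain k where k: "n = Suc k" using assms by (metis Suc_le_D One_nat_def)
  have a: "2*n - 1 = Suc (2*k)" "2 * Suc n - 2 = Suc (Suc (2*k))" "2 * Suc n - 1 = Suc (Suc (Suc (2*k)))"
    unfolding k by auto
  have sym: "Suc (2*k) choose k = Suc (2*k) choose Suc k"
    using binomial_symmetric[of k "Suc (2*k)"] by simp
  show ?thesis unfolding ff_def a k using sym by simp
qed

lemma closed:
  assumes "n \<ge> 1"
  shows "\<forall>t. 1 \<le> t \<longrightarrow> t \<le> n + 1 \<longrightarrow> int (Tc n t) = ff n t"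
  using assms
proof (induction n rule: nat_induct_at_least)
  case base
  show ?case
  proof (intro allI impI)
    fix t :: nat assume t: "1 \<le> t" "t \<le> 1 + 1"
    then consider "t = 1" | "t = 2" by linarith
    then show "int (Tc 1 t) = ff 1 t"
    proof cases
      case 1 then show ?thesis using T11 unfolding ff_def by simp
    next
      case 2 then show ?thesis using T_zero[of 1 2] unfolding ff_def by simp
    qed
  qed
next
  case (Suc n)
  have top: "int (Tc (Suc n) (n + 2)) = ff (Suc n) (n + 2)"
    using T_zero[of "Suc n" "n+2"] unfolding ff_def by (simp add: binomial_eq_0)
  have P: "int (Tc (Suc n) t) = ff (Suc n) t" if t: "1 \<le> t" "t \<le> n + 2" for t
    using t(2,1)
  proof (induction t rule: inc_induct)
    case base show ?case using top by simp
  next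
    case (step t)
    have "Tc (Suc n) t = Ec (Suc n) t + Tc (Suc n) (Suc t)" by (rule T_split)
    also have "Ec (Suc n) t = Tc n (t - 1)" by (rule E_rec[OF Suc.hyps(1) step.prems])
    finally have e: "int (Tc (Suc n) t) = int (Tc n (t - 1)) + ff (Suc n) (Suc t)"
      using step.IH step.prems by simp
    show ?case
    proof (cases "t = 1")
      case True
      have "int (Tc n (t - 1)) = ff n 1" using True T01[OF Suc.hyps(1)] Suc.IH Suc.hyps(1) by simp
      then show ?thesis using e I2[OF Suc.hyps(1)] True by (simp add: numeral_2_eq_2)
    next
      case False
      then have t2: "2 \<le> t" using step.prems by simp
      have "int (Tc n (t - 1)) = ff n (t - 1)" using Suc.IH t2 step.hyps by auto
      then show ?thesis using e I1[OF t2] step.hyps by simp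
    qed
  qed
  show ?case using P by auto
qed

lemma count_PP:
  assumes "n \<ge> 1"
  shows "real (card (PP n)) = real ((2 * n) choose (n + 1)) / real n"
proof -
  have "int (Tc n 1) = ff n 1" using closed[OF assms] assms by simp
  then have c: "int (card (PP n)) = ff n 1" using T0[of n] T01[OF assms] by simp
  obtain k where k: "n = Suc k" using assms by (metis Suc_le_D One_nat_def)
  define m where "m = Suc (2*k)"
  have a: "2 * Suc k - 1 = m" "2 * Suc k = Suc m" "Suc k + 1 = Suc (Suc k)" unfolding m_def by auto
  have id1: "Suc (Suc k) * (m choose Suc (Suc k)) = k * (m choose Suc k)"
  proof -
    have "Suc (Suc k) * (m choose Suc (Suc k)) = m * ((m - 1) choose Suc k)" by (rule binomial_absorption)
    also have "\<dots> = (m - Suc k) * (m choose Suc k)" by (rule binomial_absorb_comp[symmetric])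
    also have "m - Suc k = k" unfolding m_def by simp
    finally show ?thesis .
  qed
  define X where "X = int (m choose Suc k)"
  define Y where "Y = int (m choose Suc (Suc k))"
  have i1: "(int k + 2) * Y = int k * X"
    using arg_cong[OF id1, of int] unfolding X_def Y_def by (simp add: algebra_simps)
  have f1: "ff n 1 = X - Y" unfolding k ff_def a X_def Y_def by simp
  have f2: "int ((2 * n) choose (n + 1)) = X + Y" unfolding k a X_def Y_def by simp
  have "int n * ff n 1 = int ((2 * n) choose (n + 1))"
  proof -
    have kn: "int n = int k + 1" using k by simp
    show ?thesis unfolding f1 f2 using i1 kn by algebra
  qed
  then have "int n * int (card (PP n)) = int ((2 * n) choose (n + 1))" using c by simp
  then have "n * card (PP n) = (2 * n) choose (n + 1)" by (simp add: of_nat_mult[symmetric] del: of_nat_mult)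
  then have "real n * real (card (PP n)) = real ((2 * n) choose (n + 1))"
    by (metis of_nat_mult)
  then show ?thesis using assms by (simp add: field_simps)
qed

theorem mainTheorem15:
  fixes n :: nat
  assumes "n \<ge> 1"
  shows "real (card {\<pi>. \<pi> permutes {1..n} \<and>
            card (alignments n \<pi>) =
              (card (weak_excedences n \<pi>) - 1) * (n - card (weak_excedences n \<pi>))})
         = real ((2 * n) choose (n + 1)) / real n"
proof -
  have "{\<pi>. \<pi> permutes {1..n} \<and>
            card (alignments n \<pi>) =
              (card (weak_excedences n \<pi>) - 1) * (n - card (weak_excedences n \<pi>))} = PP n"
    unfolding PP_def using tight_nat[OF assms] unfolding tight_def by blast
  then show ?thesis using count_PP[OF assms] by simp
qed

end
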